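(* Let $C\subset\mathbf{P}^2(\mathbf{C})$ be an irreducible plane curve of type $(d,d-2)$, with singular point $Q$ of multiplicity $d-2$, and let $T(C)=\{(p_1,q_1),\dots,(p_l,q_l)\}$ be its 2-formula. Then: (i) $\sum_{i=1}^l q_i=2\sum_{i=1}^l p_i+2$; (ii) for each $i$, either $p_i=q_i$ or $\min\{p_i,q_i\}$ is even; (iii) there exists $i$ such that $q_i$ is odd.
   Context: A plane curve of type $(d,\nu)$ is a plane curve of degree $d$ whose singular points have maximal multiplicity $\nu$. The 2-formula $T(C)$: choose homogeneous coordinates $(x,y,z)$ with $Q=(0:0:1)$, so that $C$ is given by $F(x,y)z^2+2G(x,y)z+H(x,y)=0$ with $F,G,H$ homogeneous of degrees $d-2,d-1,d$; put $\Delta=G^2-FH$; let $t_1,\dots,t_l\in\mathbf{P}^1$ be all the distinct roots of $F\Delta=0$ and set $(p_i,q_i)=(\mathrm{ord}_{t_i}F,\mathrm{ord}_{t_i}\Delta)$, the multiplicities of $t_i$ as a root of $F$ and of $\Delta$; then $T(C)=\{(p_1,q_1),\dots,(p_l,q_l)\}$. *)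

theory Defs
  imports "HOL-Computational_Algebra.Computational_Algebra"
begin

text \<open>A ternary form (homogeneous polynomial in x,y,z over the complex numbers) is represented as
  a nested univariate polynomial of type complex poly poly poly: the outermost variable is z,
  the middle one is y, the innermost one is x.  The coefficient of z^i y^j x^k of P is
  coeff (coeff (coeff P i) j) k.
  A binary form in x,y is a complex poly poly (outer variable y, inner variable x).\<close>

type_synonym tform = "complex poly poly poly"
type_synonym bform = "complex poly poly"

definition homogeneous3 :: "tform \<Rightarrow> nat \<Rightarrow> bool" where
  "homogeneous3 P d \<longleftrightarrow> P \<noteq> 0 \<and>
     (\<forall>i j k. coeff (coeff (coeff P i) j) k \<noteq> 0 \<longrightarrow> i + j + k = d)"

definition eval3 :: "tform \<Rightarrow> complex \<Rightarrow> complex \<Rightarrow> complex \<Rightarrow> complex" where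
  "eval3 P a b c = poly (poly (poly P [:[:c:]:]) [:b:]) a"

definition dz :: "tform \<Rightarrow> tform" where "dz P = pderiv P"
definition dy :: "tform \<Rightarrow> tform" where "dy P = map_poly pderiv P"
definition dx :: "tform \<Rightarrow> tform" where "dx P = map_poly (map_poly pderiv) P"

definition curve_mult :: "tform \<Rightarrow> complex \<Rightarrow> complex \<Rightarrow> complex \<Rightarrow> nat" where
  "curve_mult P a b c = (LEAST n. \<exists>i j l. i + j + l = n \<and>
      eval3 ((dx ^^ i) ((dy ^^ j) ((dz ^^ l) P))) a b c \<noteq> 0)"

text \<open>Points of P^1: Some t is (x:y) = (t:1), None is (1:0).  The linear form vanishing
  at the point: x - t y, resp. y.\<close>
definition linform :: "complex option \<Rightarrow> bform" where
  "linform p = (case p of None \<Rightarrow> [:0, 1:] | Some t \<Rightarrow> [:[:0, 1:], [:- t:]:])"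

definition ordP1 :: "complex option \<Rightarrow> bform \<Rightarrow> nat" where
  "ordP1 p f = (if f = 0 then 0 else GREATEST k. linform p ^ k dvd f)"

text \<open>The data F, G, H, Delta for Q = (0:0:1): P = F z^2 + 2 G z + H.\<close>
definition formF :: "tform \<Rightarrow> bform" where "formF P = coeff P 2"
definition formG :: "tform \<Rightarrow> bform" where "formG P = map_poly (smult (1/2)) (coeff P 1)"
definition formH :: "tform \<Rightarrow> bform" where "formH P = coeff P 0"
definition formDelta :: "tform \<Rightarrow> bform" where
  "formDelta P = formG P ^ 2 - formF P * formH P"

text \<open>The support of the 2-formula: distinct roots in P^1 of F * Delta.\<close>
definition roots2 :: "tform \<Rightarrow> complex option set" where
  "roots2 P = {t. 0 < ordP1 t (formF P * formDelta P)}"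

end

theory Submission imports Defs "HOL-Computational_Algebra.Field_as_Ring" begin

definition hom2 :: "bform \<Rightarrow> nat \<Rightarrow> bool" where
  "hom2 f n \<longleftrightarrow> (\<forall>j k. coeff (coeff f j) k \<noteq> 0 \<longrightarrow> j + k = n)"

lemma hom2_mult:
  assumes "hom2 f a" "hom2 g b" shows "hom2 (f*g) (a+b)"
  unfolding hom2_def
proof (intro allI impI)
  fix j k assume "coeff (coeff (f*g) j) k \<noteq> 0"
  then obtain i l where i: "i \<le> j" and l: "l \<le> k" "coeff (coeff f i) l \<noteq> 0" "coeff (coeff g (j-i)) (k-l) \<noteq> 0"
    by (auto simp: coeff_mult coeff_sum elim!: sum.not_neutral_contains_not_neutral)
  then have "i + l = a" "(j-i) + (k-l) = b" using assms unfolding hom2_def by auto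
  then show "j + k = a + b" using i l by linarith
qed

lemma hom2_add: "hom2 f n \<Longrightarrow> hom2 g n \<Longrightarrow> hom2 (f+g) n"
  unfolding hom2_def by (metis add.right_neutral coeff_add)

lemma hom2_minus: "hom2 f n \<Longrightarrow> hom2 (-f) n"
  unfolding hom2_def by auto

lemma hom2_diff: "hom2 f n \<Longrightarrow> hom2 g n \<Longrightarrow> hom2 (f-g) n"
  using hom2_add[of f n "-g"] hom2_minus by auto

lemma hom2_const: "hom2 [:[:c:]:] 0"
  unfolding hom2_def by (auto simp: coeff_pCons split: nat.splits)

lemma hom2_one: "hom2 1 0"
  using hom2_const[of 1] by (simp add: one_pCons)

lemma hom2_linform: "hom2 (linform p) 1"
  unfolding hom2_def linform_def by (auto simp: coeff_pCons split: nat.splits option.splits)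

lemma hom2_prod_mset: "hom2 (prod_mset (image_mset linform L)) (size L)"
proof (induction L)
  case empty then show ?case by (simp add: hom2_one)
next
  case (add x L)
  then show ?case using hom2_mult[OF hom2_linform add.IH] by (simp add: mult_ac)
qed

lemma poly1_coeff:
  assumes "hom2 f n" "j + k = n"
  shows "coeff (poly f 1) k = coeff (coeff f j) k"
proof -
  have "coeff (poly f 1) k = (\<Sum>i\<le>degree f. coeff (coeff f i) k)"
    by (simp add: poly_altdef coeff_sum)
  also have "\<dots> = (\<Sum>i\<le>degree f. if i = j then coeff (coeff f j) k else 0)"
    using assms unfolding hom2_def by (intro sum.cong) (auto, metis add_right_cancel)
  also have "\<dots> = coeff (coeff f j) k"
    by (auto simp: coeff_eq_0)
  finally show ?thesis .
qed

lemma hom2_eq: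
  assumes "hom2 f n" "hom2 g n" "poly f 1 = poly g 1"
  shows "f = g"
proof (rule poly_eqI)
  fix j
  show "coeff f j = coeff g j"
  proof (rule poly_eqI)
    fix k
    show "coeff (coeff f j) k = coeff (coeff g j) k"
    proof (cases "j + k = n")
      case True
      then show ?thesis using poly1_coeff[OF assms(1) True] poly1_coeff[OF assms(2) True] assms(3) by simp
    next
      case False
      then show ?thesis using assms unfolding hom2_def by metis
    qed
  qed
qed


lemma coeff_poly1: "coeff (poly f 1) k = (\<Sum>i\<le>degree f. coeff (coeff f i) k)"
  by (simp add: poly_altdef coeff_sum)

lemma poly_linform1: "poly (linform p) 1 = (case p of Some t \<Rightarrow> [:-t,1:] | None \<Rightarrow> 1)"
  by (auto simp: linform_def split: option.splits)

lemma poly_prod_linform1: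
  "poly (prod_mset (image_mset linform (image_mset Some R + replicate_mset e None))) 1
     = prod_mset (image_mset (\<lambda>t. [:-t,1:]) R)"
  by (simp add: poly_prod_mset poly_linform1 image_mset.compositionality o_def)

lemma hom2_factor:
  assumes "hom2 f n" "f \<noteq> 0"
  obtains c L where "c \<noteq> 0" "size L = n" "f = [:[:c:]:] * prod_mset (image_mset linform L)"
proof -
  define g where "g = poly f 1"
  have dg: "degree g \<le> n"
  proof (rule degree_le)
    show "\<forall>k>n. coeff g k = 0"
      using assms(1) unfolding g_def coeff_poly1 hom2_def by (auto intro!: sum.neutral)
  qed
  obtain j where "coeff f j \<noteq> 0" using assms(2) by (metis leading_coeff_neq_0)
  then obtain k where k: "coeff (coeff f j) k \<noteq> 0" by (metis leading_coeff_neq_0)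
  then have "j + k = n" using assms(1) unfolding hom2_def by blast
  then have "coeff g k \<noteq> 0" using poly1_coeff[OF assms(1)] k unfolding g_def by simp
  then have g0: "g \<noteq> 0" by auto
  define c where "c = lead_coeff g"
  define L where "L = image_mset Some (proots g) + replicate_mset (n - degree g) None"
  define T where "T = [:[:c:]:] * prod_mset (image_mset linform L)"
  have c0: "c \<noteq> 0" using g0 unfolding c_def by simp
  have sL: "size L = n" unfolding L_def using dg by (simp add: size_proots_complex)
  have hT: "hom2 T n" unfolding T_def using hom2_mult[OF hom2_const hom2_prod_mset, of c L] sL by (simp del: mult_pCons_left)
  have "poly T 1 = [:c:] * prod_mset (image_mset (\<lambda>t. [:-t,1:]) (proots g))"
    unfolding T_def L_def by (simp only: poly_mult poly_prod_linform1) simp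
  also have "\<dots> = g" using complex_poly_decompose_multiset[of g] unfolding c_def
    by simp
  finally have "T = f" using hom2_eq[OF hT assms(1)] unfolding g_def by simp
  then show ?thesis using that c0 sL unfolding T_def by blast
qed

definition ev :: "complex option \<Rightarrow> bform \<Rightarrow> complex" where
  "ev p f = (case p of Some t \<Rightarrow> poly (poly f 1) t | None \<Rightarrow> poly (poly f 0) 1)"

lemma ev_mult: "ev p (f * g) = ev p f * ev p g"
  by (simp add: ev_def split: option.splits)

lemma ev_const: "ev p [:[:c:]:] = c"
  by (simp add: ev_def split: option.splits)

lemma ev_smult_const: "ev p (smult [:c:] f) = c * ev p f"
  by (simp add: ev_def split: option.splits)

lemma ev_linform: "ev p (linform q) = 0 \<longleftrightarrow> q = p"
  by (auto simp: ev_def linform_def split: option.splits)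

lemma ev_dvd: "linform p dvd f \<Longrightarrow> ev p f = 0"
  by (auto simp: ev_mult ev_linform elim!: dvdE)

lemma ev_prod_nz: "p \<notin># L \<Longrightarrow> ev p (prod_mset (image_mset linform L)) \<noteq> 0"
proof (induction L)
  case empty then show ?case by (simp add: ev_def split: option.splits)
next
  case (add x L)
  then show ?case by (auto simp: ev_mult ev_linform)
qed

lemma linform_nz: "linform p \<noteq> 0"
  by (auto simp: linform_def split: option.splits)

lemma dvd_char:
  assumes "c \<noteq> 0"
  shows "linform p ^ k dvd [:[:c:]:] * prod_mset (image_mset linform L) \<longleftrightarrow> k \<le> count L p"
proof -
  define L' where "L' = filter_mset (\<lambda>q. q \<noteq> p) L"
  have "L = filter_mset (\<lambda>q. q = p) L + L'" unfolding L'_def by simp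
  also have "filter_mset (\<lambda>q. q = p) L = replicate_mset (count L p) p"
    by (simp add: filter_eq_replicate_mset)
  finally have LL: "L = replicate_mset (count L p) p + L'" .
  define R where "R = [:[:c:]:] * prod_mset (image_mset linform L')"
  have eq: "[:[:c:]:] * prod_mset (image_mset linform L) = linform p ^ count L p * R"
    unfolding R_def by (subst LL) (simp add: mult_ac)
  have pL': "p \<notin># L'" unfolding L'_def by simp
  have evR: "ev p R \<noteq> 0" unfolding R_def using ev_prod_nz[OF pL'] assms by (simp add: ev_mult ev_const ev_smult_const)
  show ?thesis
  proof
    assume dv: "linform p ^ k dvd [:[:c:]:] * prod_mset (image_mset linform L)"
    show "k \<le> count L p"
    proof (rule ccontr)
      assume "\<not> k \<le> count L p"
      then have "linform p ^ Suc (count L p) dvd linform p ^ k" by (intro le_imp_power_dvd) simp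
      with dv eq have "linform p ^ count L p * linform p dvd linform p ^ count L p * R"
        by (metis dvd_trans power_Suc2)
      then have "linform p dvd R" using linform_nz by (subst (asm) dvd_mult_cancel_left) auto
      then show False using ev_dvd evR by blast
    qed
  next
    assume "k \<le> count L p"
    then have "linform p ^ k dvd linform p ^ count L p" by (rule le_imp_power_dvd)
    then show "linform p ^ k dvd [:[:c:]:] * prod_mset (image_mset linform L)"
      unfolding eq by simp
  qed
qed

lemma ord_char:
  assumes "c \<noteq> 0"
  shows "ordP1 p ([:[:c:]:] * prod_mset (image_mset linform L)) = count L p"
proof -
  have "[:[:c:]:] * prod_mset (image_mset linform L) \<noteq> 0"
    using assms linform_nz by (auto simp: prod_mset_zero_iff)
  then show ?thesis unfolding ordP1_def using dvd_char[OF assms]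
    by (auto intro!: Greatest_equality)
qed


lemma dvd_hom:
  assumes "hom2 f n" "f \<noteq> 0"
  shows "linform p ^ k dvd f \<longleftrightarrow> k \<le> ordP1 p f"
proof -
  obtain c L where "c \<noteq> 0" "f = [:[:c:]:] * prod_mset (image_mset linform L)"
    using hom2_factor[OF assms] by metis
  then show ?thesis using dvd_char ord_char by metis
qed

lemma ord_mult_hom:
  assumes "hom2 f a" "f \<noteq> 0" "hom2 g b" "g \<noteq> 0"
  shows "ordP1 p (f*g) = ordP1 p f + ordP1 p g"
proof -
  obtain c L where c: "c \<noteq> 0" "f = [:[:c:]:] * prod_mset (image_mset linform L)"
    using hom2_factor[OF assms(1,2)] by metis
  obtain c' L' where c': "c' \<noteq> 0" "g = [:[:c':]:] * prod_mset (image_mset linform L')"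
    using hom2_factor[OF assms(3,4)] by metis
  have "f * g = [:[:c*c':]:] * prod_mset (image_mset linform (L + L'))"
    using c c' by (simp add: mult_ac)
  then show ?thesis using ord_char c c' by (metis count_union mult_eq_0_iff)
qed

lemma ord_minus: "ordP1 p (-f) = ordP1 p f"
  unfolding ordP1_def by simp

lemma sum_count_mset:
  assumes "finite A" "set_mset L \<subseteq> A"
  shows "(\<Sum>p\<in>A. count L p) = size L"
  using assms(2)
proof (induction L)
  case empty then show ?case by simp
next
  case (add x L)
  have "(\<Sum>p\<in>A. count (add_mset x L) p) = (\<Sum>p\<in>A. count L p + (if p = x then 1 else 0))"
    by (intro sum.cong) auto
  also have "\<dots> = (\<Sum>p\<in>A. count L p) + 1"
    using add.prems assms(1) by (simp add: sum.distrib)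
  finally show ?case using add by simp
qed

lemma sum_ord_hom:
  assumes "hom2 f n" "f \<noteq> 0" "finite A" "{p. 0 < ordP1 p f} \<subseteq> A"
  shows "(\<Sum>p\<in>A. ordP1 p f) = n"
proof -
  obtain c L where c: "c \<noteq> 0" "size L = n" "f = [:[:c:]:] * prod_mset (image_mset linform L)"
    using hom2_factor[OF assms(1,2)] by metis
  have o: "\<And>p. ordP1 p f = count L p" using ord_char c by metis
  have "set_mset L \<subseteq> A" using assms(4) o by auto
  then show ?thesis using sum_count_mset[OF assms(3)] o c by simp
qed

lemma finite_ord_hom:
  assumes "hom2 f n" "f \<noteq> 0"
  shows "finite {p. 0 < ordP1 p f}"
proof -
  obtain c L where c: "c \<noteq> 0" "f = [:[:c:]:] * prod_mset (image_mset linform L)"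
    using hom2_factor[OF assms(1,2)] by metis
  have "{p. 0 < ordP1 p f} = set_mset L" using ord_char c by auto
  then show ?thesis by simp
qed

lemma even_mset:
  assumes "\<And>x. even (count L x)"
  shows "\<exists>M. L = M + M"
proof -
  define M where "M = Abs_multiset (\<lambda>x. count L x div 2)"
  have "finite {x. (\<lambda>x. count L x div 2) x > 0}"
    by (rule finite_subset[of _ "set_mset L"]) (auto, metis count_eq_zero_iff div_0 less_irrefl)
  then have cM: "count M x = count L x div 2" for x unfolding M_def by (simp add: count_Abs_multiset)
  have "L = M + M" by (rule multiset_eqI) (use assms cM in \<open>auto, metis dvd_mult_div_cancel mult_2\<close>)
  then show ?thesis by blast
qed

lemma square_hom:
  assumes "hom2 f n" "f \<noteq> 0" "\<And>p. even (ordP1 p f)"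
  shows "\<exists>D. f = D * D"
proof -
  obtain c L where c: "c \<noteq> 0" "f = [:[:c:]:] * prod_mset (image_mset linform L)"
    using hom2_factor[OF assms(1,2)] by metis
  have "\<And>p. even (count L p)" using assms(3) ord_char c by metis
  then obtain M where M: "L = M + M" using even_mset by blast
  define s where "s = csqrt c"
  have "c = s * s" unfolding s_def by (metis power2_csqrt power2_eq_square)
  then have "f = ([:[:s:]:] * prod_mset (image_mset linform M)) * ([:[:s:]:] * prod_mset (image_mset linform M))"
    using c M by (simp add: mult_ac)
  then show ?thesis by blast
qed


lemma coeff_dx_pow: "coeff (coeff ((dx^^a) Q) m) j = (pderiv^^a) (coeff (coeff Q m) j)"
  by (induction a) (simp_all add: dx_def coeff_map_poly)

lemma coeff_dy_pow: "coeff ((dy^^b) Q) m = (pderiv^^b) (coeff Q m)"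
  by (induction b) (simp_all add: dy_def coeff_map_poly)

lemma dz_pow: "(dz^^l) Q = (pderiv^^l) Q"
proof -
  have "dz = pderiv" by (rule ext) (simp add: dz_def)
  then show ?thesis by simp
qed

lemma poch_poly: "pochhammer (of_nat n :: 'a::comm_semiring_1 poly) l = [:pochhammer (of_nat n) l:]"
  by (induction l) (simp_all add: pochhammer_Suc of_nat_poly mult.commute)

lemma of_nat_Suc0: "of_nat (Suc 0) = (1::complex)" by simp

lemma coeff_deriv3:
  "coeff (coeff (coeff ((dx^^a) ((dy^^b) ((dz^^l) P))) m) 0) 0 =
     pochhammer 1 a * pochhammer 1 b * pochhammer (of_nat (Suc m)) l *
     coeff (coeff (coeff P (m+l)) b) a"
  by (simp add: coeff_dx_pow coeff_dy_pow dz_pow coeff_higher_pderiv poch_poly of_nat_Suc0 del: of_nat_Suc)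

lemma eval3_001: "eval3 Q 0 0 1 = (\<Sum>m\<le>degree Q. coeff (coeff (coeff Q m) 0) 0)"
proof -
  have "eval3 Q 0 0 1 = coeff (coeff (poly Q 1) 0) 0"
    by (simp add: eval3_def poly_0_coeff_0 one_pCons[symmetric])
  also have "\<dots> = (\<Sum>m\<le>degree Q. coeff (coeff (coeff Q m) 0) 0)"
    by (simp add: poly_altdef coeff_sum)
  finally show ?thesis .
qed

lemma poch1_nz: "pochhammer (1::complex) a \<noteq> 0"
  by (metis pochhammer_fact fact_nonzero)

lemma witness:
  assumes hom: "homogeneous3 P d" and nz: "coeff (coeff (coeff P i) j) k \<noteq> 0"
  shows "\<exists>a b l. a + b + l = j + k \<and> eval3 ((dx ^^ a) ((dy ^^ b) ((dz ^^ l) P))) 0 0 1 \<noteq> 0"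
proof -
  define Q where "Q = (dx ^^ k) ((dy ^^ j) ((dz ^^ 0) P))"
  have T: "coeff (coeff (coeff Q m) 0) 0 = pochhammer 1 k * pochhammer 1 j * coeff (coeff (coeff P m) j) k" for m
    unfolding Q_def using coeff_deriv3[of k j 0 P m] by simp
  have Ti: "coeff (coeff (coeff Q i) 0) 0 \<noteq> 0" using T nz poch1_nz by simp
  then have "coeff Q i \<noteq> 0" by auto
  then have iQ: "i \<le> degree Q" by (rule le_degree)
  have hd: "\<And>m. coeff (coeff (coeff P m) j) k \<noteq> 0 \<Longrightarrow> m + j + k = d"
    using hom unfolding homogeneous3_def by blast
  have "i + j + k = d" using hd nz by blast
  then have "\<And>m. m \<noteq> i \<Longrightarrow> coeff (coeff (coeff P m) j) k = 0" using hd by fastforce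
  then have "eval3 Q 0 0 1 = (\<Sum>m\<le>degree Q. if m = i then coeff (coeff (coeff Q i) 0) 0 else 0)"
    unfolding eval3_001 by (intro sum.cong) (auto simp: T)
  also have "\<dots> = coeff (coeff (coeff Q i) 0) 0" using iQ by simp
  finally have "eval3 Q 0 0 1 \<noteq> 0" using Ti by simp
  then show ?thesis unfolding Q_def by (intro exI[of _ k] exI[of _ j] exI[of _ 0]) simp
qed

lemma cm_le:
  assumes hom: "homogeneous3 P d" and nz: "coeff (coeff (coeff P i) j) k \<noteq> 0"
  shows "curve_mult P 0 0 1 \<le> j + k"
  unfolding curve_mult_def by (rule Least_le) (rule witness[OF assms])

lemma no_low:
  assumes hom: "homogeneous3 P d" and F0: "coeff P 2 = 0" and hi: "\<forall>i>2. coeff P i = 0"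
    and n: "a + b + l < d - 1"
  shows "eval3 ((dx ^^ a) ((dy ^^ b) ((dz ^^ l) P))) 0 0 1 = 0"
proof -
  have "coeff (coeff (coeff P (m+l)) b) a = 0" for m
  proof (rule ccontr)
    assume h: "coeff (coeff (coeff P (m+l)) b) a \<noteq> 0"
    then have "m + l + b + a = d" using hom unfolding homogeneous3_def by blast
    moreover have "m + l \<le> 1"
    proof (rule ccontr)
      assume "\<not> m + l \<le> 1"
      then have "m + l = 2 \<or> m + l > 2" by auto
      then show False using h F0 hi by auto
    qed
    ultimately show False using n by linarith
  qed
  then show ?thesis unfolding eval3_001 coeff_deriv3 by simp
qed


lemma P_facts:
  assumes hom: "homogeneous3 P d"
    and Qsing: "2 \<le> curve_mult P 0 0 1"
    and Qmult: "curve_mult P 0 0 1 = d - 2"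
  shows "\<forall>i>2. coeff P i = 0" "coeff P 2 \<noteq> 0" "4 \<le> d"
proof -
  show "4 \<le> d" using Qsing Qmult by linarith
  show hi: "\<forall>i>2. coeff P i = 0"
  proof (intro allI impI)
    fix i :: nat assume i: "2 < i"
    show "coeff P i = 0"
    proof (rule ccontr)
      assume "coeff P i \<noteq> 0"
      then obtain j where "coeff (coeff P i) j \<noteq> 0" by (metis leading_coeff_neq_0)
      then obtain k where k: "coeff (coeff (coeff P i) j) k \<noteq> 0" by (metis leading_coeff_neq_0)
      then have "i + j + k = d" using hom unfolding homogeneous3_def by blast
      moreover have "d - 2 \<le> j + k" using cm_le[OF hom k] Qmult by simp
      ultimately show False using i by linarith
    qed
  qed
  show "coeff P 2 \<noteq> 0"
  proof
    assume F0: "coeff P 2 = 0"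
    have "P \<noteq> 0" using hom unfolding homogeneous3_def by blast
    then obtain i where "coeff P i \<noteq> 0" by (metis leading_coeff_neq_0)
    then obtain j where "coeff (coeff P i) j \<noteq> 0" by (metis leading_coeff_neq_0)
    then obtain k where k: "coeff (coeff (coeff P i) j) k \<noteq> 0" by (metis leading_coeff_neq_0)
    have ex: "\<exists>n. \<exists>a b l. a + b + l = n \<and> eval3 ((dx ^^ a) ((dy ^^ b) ((dz ^^ l) P))) 0 0 1 \<noteq> 0"
      using witness[OF hom k] by (rule exI)
    have "\<exists>a b l. a + b + l = curve_mult P 0 0 1 \<and> eval3 ((dx ^^ a) ((dy ^^ b) ((dz ^^ l) P))) 0 0 1 \<noteq> 0"
      unfolding curve_mult_def by (rule LeastI_ex[OF ex])
    then obtain a b l where ab: "a + b + l = curve_mult P 0 0 1" "eval3 ((dx ^^ a) ((dy ^^ b) ((dz ^^ l) P))) 0 0 1 \<noteq> 0"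
      by (elim exE conjE)
    have "a + b + l < d - 1" using ab(1) Qmult Qsing by linarith
    then show False using no_low[OF hom F0 hi] ab(2) by simp
  qed
qed


lemma irr_prime: "irreducible (p::tform) \<Longrightarrow> prime_elem p"
  by (simp only: prime_elem_iff_irreducible)

lemma quad_id:
  fixes F G H D :: "'a::comm_ring_1"
  assumes "D*D = G*G - F*H"
  shows "[:F:] * [:H, G+G, F:] = [:G - D, F:] * [:G + D, F:]"
proof -
  have "(G - D) * (G + D) = F * H" using assms by (simp add: algebra_simps)
  moreover have "(G - D) * F + F * (G + D) = F * (G + G)" by (simp add: algebra_simps)
  ultimately show ?thesis by (simp add: mult.commute add.commute)
qed

theorem lemma1:
  fixes P :: tform and d :: nat
  assumes hom: "homogeneous3 P d"
    and irr: "irreducible P"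
    and Qsing: "2 \<le> curve_mult P 0 0 1"
    and Qmult: "curve_mult P 0 0 1 = d - 2"
    and type: "\<forall>a b c. (a, b, c) \<noteq> (0, 0, 0) \<and> 2 \<le> curve_mult P a b c
                 \<longrightarrow> curve_mult P a b c \<le> d - 2"
  shows "((\<Sum>t\<in>roots2 P. ordP1 t (formDelta P)) = 2 * (\<Sum>t\<in>roots2 P. ordP1 t (formF P)) + 2)
    \<and> (\<forall>t\<in>roots2 P. ordP1 t (formF P) = ordP1 t (formDelta P)
            \<or> even (min (ordP1 t (formF P)) (ordP1 t (formDelta P))))
    \<and> (\<exists>t\<in>roots2 P. odd (ordP1 t (formDelta P)))"
proof -
  note PF = P_facts[OF hom Qsing Qmult]
  have hi: "\<forall>i>2. coeff P i = 0" and d4: "4 \<le> d" using PF by auto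
  define F where "F = formF P"
  define G where "G = formG P"
  define H where "H = formH P"
  define Dl where "Dl = formDelta P"
  have F0: "F \<noteq> 0" using PF unfolding F_def formF_def by auto
  have Dl_eq: "Dl = G * G - F * H"
    unfolding Dl_def formDelta_def F_def G_def H_def by (simp add: power2_eq_square)
  have cG: "coeff (coeff G j) k = coeff (coeff (coeff P 1) j) k / 2" for j k
    unfolding G_def formG_def by (simp add: coeff_map_poly)
  have GG: "G + G = coeff P 1"
    by (intro poly_eqI) (simp only: coeff_add cG, simp)
  have Peq: "P = [:H, G + G, F:]"
  proof (rule poly_eqI)
    fix n :: nat
    consider "n = 0" | "n = 1" | "n = 2" | "n > 2" by linarith
    then show "coeff P n = coeff [:H, G + G, F:] n"
    proof cases
      case 4
      define m where "m = n - 3"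
      have "n = Suc (Suc (Suc m))" using 4 unfolding m_def by simp
      then show ?thesis using hi 4 by simp
    qed (auto simp: H_def formH_def F_def formF_def GG numeral_2_eq_2)
  qed
  have hcoef: "\<And>i j k. coeff (coeff (coeff P i) j) k \<noteq> 0 \<Longrightarrow> i + j + k = d"
    using hom unfolding homogeneous3_def by blast
  have hF: "hom2 F (d-2)" unfolding hom2_def F_def formF_def using hcoef by fastforce
  have hG: "hom2 G (d-1)" unfolding hom2_def cG using hcoef by fastforce
  have hH: "hom2 H d" unfolding hom2_def H_def formH_def using hcoef by fastforce
  have hGG: "hom2 (G*G) (2*d-2)" 
  proof -
    have "d - 1 + (d - 1) = 2*d-2" using d4 by simp
    then show ?thesis using hom2_mult[OF hG hG] by simp
  qed
  have hFH: "hom2 (F*H) (2*d-2)" 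
  proof -
    have "d - 2 + d = 2*d-2" using d4 by simp
    then show ?thesis using hom2_mult[OF hF hH] by simp
  qed
  have hD: "hom2 Dl (2*d-2)" unfolding Dl_eq by (rule hom2_diff[OF hGG hFH])
  have degP: "degree P = 2"
  proof -
    have "degree [:H, G+G, F:] = 2" using F0 by simp
    then show ?thesis using Peq by metis
  qed
  have prP: "prime_elem P" by (rule irr_prime[OF irr])
  have nsq: "Dl \<noteq> D * D" for D
  proof
    assume DD: "Dl = D * D"
    define A where "A = [:G - D, F:]"
    define B where "B = [:G + D, F:]"
    have "D * D = G * G - F * H" using DD Dl_eq by simp
    then have "[:F:] * [:H, G+G, F:] = A * B" unfolding A_def B_def by (rule quad_id)
    then have "[:F:] * P = A * B" using Peq by simp
    then have "P dvd A * B" by (metis dvd_triv_right)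
    then have "P dvd A \<or> P dvd B" using prP prime_elem_dvd_mult_iff by blast
    moreover have "A \<noteq> 0" "B \<noteq> 0" "degree A = 1" "degree B = 1" using F0 unfolding A_def B_def by auto
    ultimately have "degree P \<le> 1" using dvd_imp_degree_le by metis
    then show False using degP by simp
  qed
  then have D0: "Dl \<noteq> 0" by (metis mult_zero_left)
  have line: "\<not> (linform p dvd F \<and> linform p dvd G \<and> linform p dvd H)" for p
  proof
    assume a: "linform p dvd F \<and> linform p dvd G \<and> linform p dvd H"
    have "[:linform p:] dvd [:H, G + G, F:]"
      unfolding const_poly_dvd_iff using a by (auto simp: coeff_pCons split: nat.splits)
    then obtain Q' where Q': "P = [:linform p:] * Q'" using Peq by (metis dvdE)
    then have "is_unit [:linform p:] \<or> is_unit Q'" using irr irreducibleD by blast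
    then show False
    proof
      assume "is_unit [:linform p:]"
      then have "linform p dvd 1" using is_unit_const_poly_iff by blast
      then obtain w where "1 = linform p * w" by (metis dvdE)
      then have "ev p 1 = ev p (linform p) * ev p w" by (metis ev_mult)
      moreover have "ev p 1 = 1" by (simp add: ev_def split: option.splits)
      ultimately show False using ev_linform[of p p] by simp
    next
      assume "is_unit Q'"
      then obtain w where w: "1 = Q' * w" by (metis dvdE)
      then have "Q' \<noteq> 0" "w \<noteq> 0" by auto
      then have "degree Q' = 0" using w degree_mult_eq[of Q' w] by simp
      then have "degree P = 0" using Q' linform_nz by (simp add: degree_mult_eq)
      then show False using degP by simp
    qed
  qed
  have G0H: "G = 0 \<Longrightarrow> H \<noteq> 0" using D0 unfolding Dl_eq by auto
  have ordFD: "ordP1 t (F*Dl) = ordP1 t F + ordP1 t Dl" for t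
    by (rule ord_mult_hom[OF hF F0 hD D0])
  have R: "roots2 P = {t. 0 < ordP1 t F} \<union> {t. 0 < ordP1 t Dl}"
    unfolding roots2_def F_def[symmetric] Dl_def[symmetric] ordFD by auto
  have finR: "finite (roots2 P)" unfolding R using finite_ord_hom[OF hF F0] finite_ord_hom[OF hD D0] by simp
  have s1: "(\<Sum>t\<in>roots2 P. ordP1 t Dl) = 2*d-2"
    by (rule sum_ord_hom[OF hD D0 finR]) (auto simp: R)
  have s2: "(\<Sum>t\<in>roots2 P. ordP1 t F) = d-2"
    by (rule sum_ord_hom[OF hF F0 finR]) (auto simp: R)
  have part1: "(\<Sum>t\<in>roots2 P. ordP1 t Dl) = 2 * (\<Sum>t\<in>roots2 P. ordP1 t F) + 2"
    using s1 s2 d4 by simp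
  have part2: "ordP1 t F = ordP1 t Dl \<or> even (min (ordP1 t F) (ordP1 t Dl))" for t
  proof -
    define pi where "pi = linform t"
    have dF: "pi ^ k dvd F \<longleftrightarrow> k \<le> ordP1 t F" for k unfolding pi_def by (rule dvd_hom[OF hF F0])
    have dD: "pi ^ k dvd Dl \<longleftrightarrow> k \<le> ordP1 t Dl" for k unfolding pi_def by (rule dvd_hom[OF hD D0])
    show ?thesis
    proof (cases "ordP1 t F = 0")
      case True then show ?thesis by simp
    next
      case pF: False
      then have piF: "pi dvd F" using dF[of 1] by simp
      show ?thesis
      proof (cases "G = 0")
        case True
        then have H0: "H \<noteq> 0" using G0H by blast
        have "\<not> pi dvd H" using line[of t] piF True unfolding pi_def by simp
        then have "ordP1 t H = 0" using dvd_hom[OF hH H0, of t 1] unfolding pi_def by simp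
        moreover have "Dl = - (F * H)" using True Dl_eq by simp
        ultimately have "ordP1 t Dl = ordP1 t F"
          using ord_minus ord_mult_hom[OF hF F0 hH H0] by simp
        then show ?thesis by simp
      next
        case G0: False
        have GG0: "G * G \<noteq> 0" using G0 by simp
        have FH_dvd: "pi ^ k dvd F * H" if "k \<le> ordP1 t F" for k
          using dF that by (meson dvd_mult2)
        have oGG: "ordP1 t (G*G) = 2 * ordP1 t G" using ord_mult_hom[OF hG G0 hG G0] by simp
        have dGG: "pi ^ k dvd G*G \<longleftrightarrow> k \<le> ordP1 t (G*G)" for k
          unfolding pi_def by (rule dvd_hom[OF hGG GG0])
        have sum1: "G * G = Dl + F * H" unfolding Dl_eq by simp
        show ?thesis
        proof (cases "pi dvd G")
          case False
          then have oG: "ordP1 t G = 0" using dvd_hom[OF hG G0, of t 1] unfolding pi_def by simp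
          have "ordP1 t Dl = 0"
          proof (rule ccontr)
            assume "ordP1 t Dl \<noteq> 0"
            then have "pi dvd Dl" using dD[of 1] by simp
            moreover have "pi dvd F * H" using piF by simp
            ultimately have "pi dvd G * G" unfolding sum1 by simp
            then show False using dGG[of 1] oGG oG by simp
          qed
          then show ?thesis by simp
        next
          case piG: True
          then have H0: "H \<noteq> 0" using line[of t] piF unfolding pi_def by auto
          have "\<not> pi dvd H" using line[of t] piF piG unfolding pi_def by simp
          then have oH: "ordP1 t H = 0" using dvd_hom[OF hH H0, of t 1] unfolding pi_def by simp
          have FH0: "F * H \<noteq> 0" using F0 H0 by simp
          have oFH: "ordP1 t (F*H) = ordP1 t F" using ord_mult_hom[OF hF F0 hH H0] oH by simp
          have dFH: "pi ^ k dvd F*H \<longleftrightarrow> k \<le> ordP1 t F" for k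
            unfolding pi_def oFH[symmetric] by (rule dvd_hom[OF hFH FH0])
          define a where "a = ordP1 t (G*G)"
          define b where "b = ordP1 t F"
          have "pi ^ min a b dvd Dl"
          proof -
            have "pi ^ min a b dvd G*G" using dGG a_def by simp
            moreover have "pi ^ min a b dvd F*H" using dFH b_def by simp
            ultimately show ?thesis using Dl_eq by (simp add: dvd_diff)
          qed
          then have ge: "min a b \<le> ordP1 t Dl" using dD by blast
          consider "a < b" | "b < a" | "a = b" by linarith
          then show ?thesis
          proof cases
            case 1
            have "\<not> Suc a \<le> ordP1 t Dl"
            proof
              assume "Suc a \<le> ordP1 t Dl"
              then have "pi ^ Suc a dvd Dl" using dD by blast
              moreover have "pi ^ Suc a dvd F * H" using dFH[of "Suc a"] 1 b_def by (simp del: power_Suc)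
              ultimately have "pi ^ Suc a dvd G * G" unfolding sum1 by simp
              then show False using dGG[of "Suc a"] a_def by (simp del: power_Suc)
            qed
            then have "ordP1 t Dl = a" using ge 1 by simp
            then show ?thesis using 1 oGG a_def b_def by simp
          next
            case 2
            have "\<not> Suc b \<le> ordP1 t Dl"
            proof
              assume "Suc b \<le> ordP1 t Dl"
              then have "pi ^ Suc b dvd Dl" using dD by blast
              moreover have "pi ^ Suc b dvd G * G" using dGG[of "Suc b"] 2 a_def by (simp del: power_Suc)
              moreover have "F * H = G * G - Dl" using Dl_eq by simp
              ultimately have "pi ^ Suc b dvd F * H" by (metis dvd_diff)
              then show False using dFH[of "Suc b"] b_def by (simp del: power_Suc)
            qed
            then have "ordP1 t Dl = b" using ge 2 by simp
            then show ?thesis using b_def by simp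
          next
            case 3
            then have "min (ordP1 t F) (ordP1 t Dl) = 2 * ordP1 t G" using ge oGG a_def b_def by simp
            then show ?thesis by simp
          qed
        qed
      qed
    qed
  qed
  have part3: "\<exists>t\<in>roots2 P. odd (ordP1 t Dl)"
  proof (rule ccontr)
    assume "\<not> ?thesis"
    then have "even (ordP1 p Dl)" for p by (cases "p \<in> roots2 P") (auto simp: R)
    then obtain D where "Dl = D * D" using square_hom[OF hD D0] by blast
    then show False using nsq by blast
  qed
  show ?thesis using part1 part2 part3 unfolding F_def Dl_def by blast
qed

end
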